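(* Let $0<a,b<1$, $P_1=T_1$, $P_2>0$. Consider the scheme where user 1 sends only a private Gaussian message of power $P_1$ and user 2 sends a public Gaussian message of power $P_2-\hat P_2$ and a private Gaussian message of power $\hat P_2$, with $\hat P_2\in[0,P_2]$; user 2's public message is decoded first at both receivers treating all other signals as noise, at the largest rate decodable at both receivers, and then the private messages are decoded treating the remaining interference as noise. Then for every $\hat P_2\in[0,P_2]$ the rate of user 2's public message is limited by receiver 1, and the sum-rate equals $\tfrac12\log_2(T_1+aP_2+1)$, independent of $\hat P_2$. Symmetrically, if $P_2=T_2$ the analogous scheme with roles of the users exchanged gives sum-rate $\tfrac12\log_2(T_2+bP_1+1)$ independent of the split of user 1's power.
   Context: Weak GIC $Y_1=X_1+\sqrt aX_2+Z_1$, $Y_2=\sqrt bX_1+X_2+Z_2$ with $Z_i\sim N(0,1)$ independent of inputs; $T_1=\frac{1-a}{ab}$, $T_2=\frac{1-b}{ab}$. *)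

theory Defs
  imports Complex_Main
begin

text \<open>Weak Gaussian interference channel
  Y1 = X1 + sqrt a X2 + Z1, Y2 = sqrt b X1 + X2 + Z2, unit noise variances.\<close>

definition T1 :: "real \<Rightarrow> real \<Rightarrow> real" where "T1 a b = (1 - a) / (a * b)"
definition T2 :: "real \<Rightarrow> real \<Rightarrow> real" where "T2 a b = (1 - b) / (a * b)"

definition Cg :: "real \<Rightarrow> real" where "Cg x = 1/2 * log 2 (1 + x)"

text \<open>Scheme A: user 1 sends only a private message of power P1; user 2 sends a public
  message of power P2 - Q and a private message of power Q.\<close>

definition pubA_rx1 :: "real \<Rightarrow> real \<Rightarrow> real \<Rightarrow> real \<Rightarrow> real \<Rightarrow> real" where
  "pubA_rx1 a b P1 P2 Q = Cg (a * (P2 - Q) / (P1 + a * Q + 1))"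
definition pubA_rx2 :: "real \<Rightarrow> real \<Rightarrow> real \<Rightarrow> real \<Rightarrow> real \<Rightarrow> real" where
  "pubA_rx2 a b P1 P2 Q = Cg ((P2 - Q) / (b * P1 + Q + 1))"
definition pubA_rate :: "real \<Rightarrow> real \<Rightarrow> real \<Rightarrow> real \<Rightarrow> real \<Rightarrow> real" where
  "pubA_rate a b P1 P2 Q = min (pubA_rx1 a b P1 P2 Q) (pubA_rx2 a b P1 P2 Q)"
definition privA_1 :: "real \<Rightarrow> real \<Rightarrow> real \<Rightarrow> real \<Rightarrow> real \<Rightarrow> real" where
  "privA_1 a b P1 P2 Q = Cg (P1 / (a * Q + 1))"
definition privA_2 :: "real \<Rightarrow> real \<Rightarrow> real \<Rightarrow> real \<Rightarrow> real \<Rightarrow> real" where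
  "privA_2 a b P1 P2 Q = Cg (Q / (b * P1 + 1))"
definition sumA :: "real \<Rightarrow> real \<Rightarrow> real \<Rightarrow> real \<Rightarrow> real \<Rightarrow> real" where
  "sumA a b P1 P2 Q = pubA_rate a b P1 P2 Q + privA_1 a b P1 P2 Q + privA_2 a b P1 P2 Q"

text \<open>Scheme B (roles exchanged): user 2 sends only a private message of power P2; user 1
  sends a public message of power P1 - Q and a private message of power Q.\<close>

definition pubB_rx1 :: "real \<Rightarrow> real \<Rightarrow> real \<Rightarrow> real \<Rightarrow> real \<Rightarrow> real" where
  "pubB_rx1 a b P1 P2 Q = Cg ((P1 - Q) / (a * P2 + Q + 1))"
definition pubB_rx2 :: "real \<Rightarrow> real \<Rightarrow> real \<Rightarrow> real \<Rightarrow> real \<Rightarrow> real" where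
  "pubB_rx2 a b P1 P2 Q = Cg (b * (P1 - Q) / (P2 + b * Q + 1))"
definition pubB_rate :: "real \<Rightarrow> real \<Rightarrow> real \<Rightarrow> real \<Rightarrow> real \<Rightarrow> real" where
  "pubB_rate a b P1 P2 Q = min (pubB_rx1 a b P1 P2 Q) (pubB_rx2 a b P1 P2 Q)"
definition privB_1 :: "real \<Rightarrow> real \<Rightarrow> real \<Rightarrow> real \<Rightarrow> real \<Rightarrow> real" where
  "privB_1 a b P1 P2 Q = Cg (Q / (a * P2 + 1))"
definition privB_2 :: "real \<Rightarrow> real \<Rightarrow> real \<Rightarrow> real \<Rightarrow> real \<Rightarrow> real" where
  "privB_2 a b P1 P2 Q = Cg (P2 / (b * Q + 1))"
definition sumB :: "real \<Rightarrow> real \<Rightarrow> real \<Rightarrow> real \<Rightarrow> real \<Rightarrow> real" where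
  "sumB a b P1 P2 Q = pubB_rate a b P1 P2 Q + privB_1 a b P1 P2 Q + privB_2 a b P1 P2 Q"

end

theory Submission
  imports Defs
begin

lemma log3: fixes u v w t :: real assumes "u>0" "v>0" "w>0" "u*v*w = t"
  shows "1/2 * log 2 u + 1/2 * log 2 v + 1/2 * log 2 w = 1/2 * log 2 t"
proof -
  have "log 2 t = log 2 u + log 2 v + log 2 w"
    using assms(1-3) unfolding assms(4)[symmetric] by (simp add: log_mult)
  thus ?thesis by simp
qed

lemma Cg_mono: assumes "0 \<le> x" "x \<le> y" shows "Cg x \<le> Cg y"
  using assms unfolding Cg_def by simp

lemma partA:
  fixes a b P1 P2 Q :: real
  assumes a: "0 < a" "a < 1" "0 < b" "b < 1" and h: "a*b*P1 = 1 - a" and p1: "P1 > 0"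
    and q: "0 \<le> Q" "Q \<le> P2"
  shows "pubA_rate a b P1 P2 Q = pubA_rx1 a b P1 P2 Q \<and>
            sumA a b P1 P2 Q = 1/2 * log 2 (P1 + a * P2 + 1)"
proof
  have d1: "P1 + a*Q + 1 > 0" using a p1 q by (smt (verit) mult_nonneg_nonneg)
  have d2: "b*P1 + Q + 1 > 0" using a p1 q by (smt (verit) mult_pos_pos)
  have le: "a * (P2 - Q) / (P1 + a * Q + 1) \<le> (P2 - Q) / (b * P1 + Q + 1)"
  proof -
    have "a * (P2 - Q) * (b * P1 + Q + 1) \<le> (P2 - Q) * (P1 + a * Q + 1)"
    proof -
      have "a * (b * P1 + Q + 1) \<le> P1 + a * Q + 1" using h p1 by (simp add: algebra_simps)
      hence "(P2 - Q) * (a * (b * P1 + Q + 1)) \<le> (P2 - Q) * (P1 + a * Q + 1)"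
        using q by (intro mult_left_mono) auto
      thus ?thesis by (simp add: algebra_simps)
    qed
    thus ?thesis using d1 d2 by (simp add: divide_simps)
  qed
  have nn: "0 \<le> a * (P2 - Q) / (P1 + a * Q + 1)" using a q d1 by simp
  show "pubA_rate a b P1 P2 Q = pubA_rx1 a b P1 P2 Q"
    unfolding pubA_rate_def pubA_rx1_def pubA_rx2_def using Cg_mono[OF nn le] by simp
  have aq: "a*Q+1 > 0" using a q by (smt (verit) mult_nonneg_nonneg)
  have bp: "b*P1+1 > 0" using a p1 by (smt (verit) mult_pos_pos)
  have e1: "1 + a * (P2 - Q) / (P1 + a * Q + 1) = (P1 + a*P2 + 1) / (P1 + a*Q+1)"
    using d1 by (simp add: field_simps)
  have e2: "1 + P1 / (a*Q+1) = (P1 + a*Q+1) / (a*Q+1)" using aq by (simp add: field_simps)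
  have e3: "1 + Q / (b*P1+1) = (b*P1+Q+1) / (b*P1+1)" using bp by (simp add: field_simps)
  have key: "(a*Q+1)*(b*P1+1) = b*P1+Q+1"
  proof -
    have "(a*Q+1)*(b*P1+1) = (a*b*P1)*Q + a*Q + b*P1 + 1" by (simp add: algebra_simps)
    also have "\<dots> = (1 - a)*Q + a*Q + b*P1 + 1" using h by simp
    also have "\<dots> = b*P1+Q+1" by (simp add: algebra_simps)
    finally show ?thesis .
  qed
  have pos: "P1 + a*P2 + 1 > 0" using a p1 q by (smt (verit) mult_nonneg_nonneg)
  have prod: "(P1 + a*P2 + 1) / (P1 + a*Q+1) * ((P1 + a*Q+1) / (a*Q+1)) * ((b*P1+Q+1) / (b*P1+1))
     = P1 + a*P2 + 1"
  proof -
    have "(P1 + a*P2 + 1) / (P1 + a*Q+1) * ((P1 + a*Q+1) / (a*Q+1)) * ((b*P1+Q+1) / (b*P1+1))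
      = (P1 + a*P2 + 1) * (b*P1+Q+1) / ((a*Q+1)*(b*P1+1))" using d1 by simp
    also have "\<dots> = P1 + a*P2 + 1" unfolding key using d2 by simp
    finally show ?thesis .
  qed
  show "sumA a b P1 P2 Q = 1/2 * log 2 (P1 + a * P2 + 1)"
    unfolding sumA_def privA_1_def privA_2_def pubA_rate_def pubA_rx1_def pubA_rx2_def
      min_def Cg_def
    using Cg_mono[OF nn le] unfolding Cg_def
    apply (simp only: if_P e1 e2 e3)
    apply (rule log3[OF _ _ _ prod])
    using pos d1 aq bp d2 by auto
qed

theorem mainTheorem9:
  fixes a b :: real
  assumes "0 < a" "a < 1" "0 < b" "b < 1"
  shows "(\<forall>P1 P2 Q. P1 = T1 a b \<and> 0 < P2 \<and> 0 \<le> Q \<and> Q \<le> P2 \<longrightarrow>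
            pubA_rate a b P1 P2 Q = pubA_rx1 a b P1 P2 Q \<and>
            sumA a b P1 P2 Q = 1/2 * log 2 (T1 a b + a * P2 + 1))
       \<and> (\<forall>P1 P2 Q. P2 = T2 a b \<and> 0 < P1 \<and> 0 \<le> Q \<and> Q \<le> P1 \<longrightarrow>
            pubB_rate a b P1 P2 Q = pubB_rx2 a b P1 P2 Q \<and>
            sumB a b P1 P2 Q = 1/2 * log 2 (T2 a b + b * P1 + 1))"
proof (intro conjI allI impI)
  fix P1 P2 Q :: real assume H: "P1 = T1 a b \<and> 0 < P2 \<and> 0 \<le> Q \<and> Q \<le> P2"
  have h: "a*b*P1 = 1 - a" using H assms by (simp add: T1_def)
  have p: "P1 > 0" using H assms by (simp add: T1_def)
  from partA[OF assms h p] H show "pubA_rate a b P1 P2 Q = pubA_rx1 a b P1 P2 Q" by auto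
  from partA[OF assms h p] H show "sumA a b P1 P2 Q = 1/2 * log 2 (T1 a b + a * P2 + 1)" by auto
next
  fix P1 P2 Q :: real assume H: "P2 = T2 a b \<and> 0 < P1 \<and> 0 \<le> Q \<and> Q \<le> P1"
  have h: "b*a*P2 = 1 - b" using H assms by (simp add: T2_def)
  have p: "P2 > 0" using H assms by (simp add: T2_def)
  have A: "pubA_rate b a P2 P1 Q = pubA_rx1 b a P2 P1 Q \<and>
            sumA b a P2 P1 Q = 1/2 * log 2 (P2 + b * P1 + 1)"
    using partA[of b a P2 Q P1] assms h p H by auto
  have r: "pubB_rx2 a b P1 P2 Q = pubA_rx1 b a P2 P1 Q" "pubB_rx1 a b P1 P2 Q = pubA_rx2 b a P2 P1 Q"
    "pubB_rate a b P1 P2 Q = pubA_rate b a P2 P1 Q"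
    "sumB a b P1 P2 Q = sumA b a P2 P1 Q"
    unfolding pubB_rx2_def pubA_rx1_def pubB_rx1_def pubA_rx2_def pubB_rate_def pubA_rate_def
      sumB_def sumA_def privA_1_def privA_2_def privB_1_def privB_2_def
    by (auto simp: min_def)
  show "pubB_rate a b P1 P2 Q = pubB_rx2 a b P1 P2 Q" using A r by simp
  show "sumB a b P1 P2 Q = 1/2 * log 2 (T2 a b + b * P1 + 1)" using A r H by simp
qed

end
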